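(* Let $c>0$, $k>0$, and $s,t\in\mathbb{R}$. Consider the function $$\gamma_1(x)=\frac{L'+M'\cos(s+x)}{N'+P'\cos(t+x)},\qquad x\in\mathbb{R},$$ with $L'=2$, $M'=2$, $N'=1+k^2+c$, $P'=2k$ (this corresponds to $\gamma_1(x)=\frac{P_0|a_1e^{jx}+h|^2}{P_1|b_1e^{jx}+g|^2+c}$ with $|a_1|=|b_1|=|h|=1$, $P_0=P_1=1$, $|g|=k$, $s=\angle a_1-\angle h$, $t=\angle b_1-\angle g$). Let $C'=(L'P')^2+(M'N')^2-2L'M'N'P'\cos(s-t)$ and let $\gamma_{\max}\ge\gamma_{\min}$ be the two values $$\frac{L'}{N'}-\frac{1}{N'}\,\frac{C'}{P'\bigl(L'P'-M'N'\cos(s-t)\bigr)\pm N'\sqrt{C'-\bigl(M'P'\sin(s-t)\bigr)^2}}$$ (the SINR values at the stationary points of $\gamma_1$). Let $\gamma_2=\gamma_1(-s)=\frac{L'+M'}{N'+P'\cos(s-t)}$ be the value at the signal-alignment choice $x=-s$. Then $$\gamma_{\max}-\gamma_2=g_1(k)=\frac{16k^2\sin^2(s-t)}{(k^2+2k\cos(s-t)+1+c)\bigl((k+1)^2+c\bigr)\bigl((k-1)^2+c\bigr)},$$ $$\gamma_2-\gamma_{\min}=g_2(k)=\frac{4}{k^2+2k\cos(s-t)+1+c}.$$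
   Context: $\angle z$ denotes the argument of a complex number $z$. The signal-alignment (SA) solution chooses the phase $x$ so that the reflected signal $a_1e^{jx}$ is phase-aligned with the direct signal $h$, i.e. $x=-s$. *)

theory Defs
  imports Complex_Main
begin

definition gamma1 :: "real \<Rightarrow> real \<Rightarrow> real \<Rightarrow> real \<Rightarrow> real \<Rightarrow> real \<Rightarrow> real \<Rightarrow> real" where
  "gamma1 L M N P s t x = (L + M * cos (s + x)) / (N + P * cos (t + x))"

definition Cprime :: "real \<Rightarrow> real \<Rightarrow> real \<Rightarrow> real \<Rightarrow> real \<Rightarrow> real \<Rightarrow> real" where
  "Cprime L M N P s t = (L*P)^2 + (M*N)^2 - 2*L*M*N*P*cos (s - t)"

definition stat_val :: "real \<Rightarrow> real \<Rightarrow> real \<Rightarrow> real \<Rightarrow> real \<Rightarrow> real \<Rightarrow> real \<Rightarrow> real" where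
  "stat_val L M N P s t \<sigma> =
     L / N - (1 / N) * (Cprime L M N P s t /
       (P * (L*P - M*N*cos (s - t)) + \<sigma> * N * sqrt (Cprime L M N P s t - (M*P*sin (s - t))^2)))"

end

theory Submission
  imports Defs
begin

theorem corollary1:
  fixes c k s t :: real
  assumes "c > 0" and "k > 0"
  defines "L \<equiv> (2::real)" and "M \<equiv> (2::real)" and "N \<equiv> 1 + k^2 + c" and "P \<equiv> 2 * k"
  defines "gmax \<equiv> max (stat_val L M N P s t 1) (stat_val L M N P s t (-1))"
      and "gmin \<equiv> min (stat_val L M N P s t 1) (stat_val L M N P s t (-1))"
      and "g2 \<equiv> gamma1 L M N P s t (-s)"
  shows "gmax - g2 = 16 * k^2 * (sin (s - t))^2 /
            ((k^2 + 2*k*cos (s - t) + 1 + c) * ((k + 1)^2 + c) * ((k - 1)^2 + c))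
       \<and> g2 - gmin = 4 / (k^2 + 2*k*cos (s - t) + 1 + c)"
proof -
  define co where "co = cos (s - t)"
  define si where "si = sin (s - t)"
  have sc: "si^2 = 1 - co^2" unfolding si_def co_def by (simp add: sin_squared_eq)
  have co1: "co \<le> 1" "-1 \<le> co" unfolding co_def by auto
  have "0 \<le> (k-1)^2" by simp
  hence kk: "2*k \<le> 1 + k^2" by (simp add: power2_diff)
  have Nk: "N > 2*k" using kk assms(1) unfolding N_def by linarith
  have kco1: "k*co \<le> k*1" using mult_left_mono[OF co1(1)] assms(2) by simp
  have kco2: "k*(-1) \<le> k*co" using mult_left_mono[OF co1(2)] assms(2) by simp
  have pos1: "N - 2*k*co > 0" using Nk kco1 by linarith
  have pos2: "N + 2*k*co > 0" using Nk kco2 by linarith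
  have Npos: "N > 0" using Nk assms(2) by linarith
  have Cp: "Cprime L M N P s t = 4*N^2 - 16*k*N*co + 16*k^2"
    unfolding Cprime_def L_def M_def P_def co_def[symmetric] by (simp add: power2_eq_square algebra_simps)
  have e: "(M*P*sin (s - t))^2 = 16*k^2*(1 - co^2)"
    unfolding M_def P_def si_def[symmetric] sc[symmetric] by (simp add: power_mult_distrib)
  have "Cprime L M N P s t - (M*P*sin (s - t))^2 = (2*(N - 2*k*co))^2"
    unfolding Cp e by (simp add: power2_eq_square algebra_simps)
  hence sq: "sqrt (Cprime L M N P s t - (M*P*sin (s - t))^2) = 2*(N - 2*k*co)"
    using pos1 by simp
  have d1: "P * (L*P - M*N*cos (s - t)) + 1 * N * (2*(N - 2*k*co)) = (4*N^2 - 16*k*N*co + 16*k^2) / 2"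
    unfolding L_def M_def P_def co_def[symmetric] by (simp add: algebra_simps power2_eq_square)
  have Cq: "Cprime L M N P s t = 4*(N - 2*k*co)^2 + 16*k^2*(1-co^2)"
  proof -
    have "4*(N - 2*k*co)^2 + 16*k^2*(1-co^2) = 4*N^2 - 16*k*N*co + 16*k^2"
      by (simp add: power2_eq_square algebra_simps)
    thus ?thesis using Cp by simp
  qed
  have "0 \<le> 1 - co^2" using sc by (metis zero_le_power2)
  hence "0 \<le> 16*k^2*(1-co^2)" by simp
  moreover have "0 < 4*(N - 2*k*co)^2" using pos1 by simp
  ultimately have Cpos: "Cprime L M N P s t > 0" unfolding Cq by linarith
  have s1: "stat_val L M N P s t 1 = 0"
    unfolding stat_val_def sq d1 Cp[symmetric] using Cpos Npos unfolding L_def by simp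
  have d2: "P * (L*P - M*N*cos (s - t)) + (-1) * N * (2*(N - 2*k*co)) = -2*(N^2 - 4*k^2)"
    unfolding L_def M_def P_def co_def[symmetric] by (simp add: algebra_simps power2_eq_square)
  have NN0: "N^2 - 4*k^2 = (N - 2*k)*(N + 2*k)" by (simp add: power2_eq_square algebra_simps)
  have NN: "N^2 - 4*k^2 > 0" unfolding NN0 using Nk assms(2) by simp
  define D where "D = N^2 - 4*k^2"
  have Dp: "D > 0" using NN D_def by simp
  have "stat_val L M N P s t (-1) = 2/N + Cprime L M N P s t / (2*N*D)"
    unfolding stat_val_def sq d2 unfolding L_def D_def[symmetric] by simp
  also have "\<dots> = (4*D + Cprime L M N P s t) / (2*N*D)"
    using Npos Dp by (simp add: field_simps)
  also have "4*D + Cprime L M N P s t = (2*N*D) * (4*(N - 2*k*co)/D)"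
    unfolding Cp D_def using NN by (simp add: field_simps power2_eq_square)
  also have "(2*N*D) * (4*(N - 2*k*co)/D) / (2*N*D) = 4*(N - 2*k*co)/D"
    using Npos Dp by simp
  finally have s2: "stat_val L M N P s t (-1) = 4*(N - 2*k*co)/D" .
  have s2pos: "stat_val L M N P s t (-1) > 0" unfolding s2 by (rule divide_pos_pos[OF mult_pos_pos[OF _ pos1] Dp]) simp
  have gmx: "gmax = 4*(N - 2*k*co)/D" unfolding gmax_def s1 using s2 s2pos by simp
  have gmn: "gmin = 0" unfolding gmin_def s1 using s2pos by simp
  have g2v: "g2 = 4 / (N + 2*k*co)"
    unfolding g2_def gamma1_def L_def M_def P_def co_def by (simp add: mult.commute cos_minus[of "s - t", symmetric])
  have prod: "((k + 1)^2 + c) * ((k - 1)^2 + c) = D"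
    unfolding N_def D_def by (simp add: algebra_simps power2_eq_square)
  have den: "k^2 + 2*k*cos (s - t) + 1 + c = N + 2*k*co" unfolding N_def co_def by simp
  have num: "4*(N - 2*k*co)*(N + 2*k*co) - 4*D = 16*k^2*si^2"
    unfolding D_def sc by (simp add: algebra_simps power2_eq_square)
  have "gmax - g2 = (4*(N - 2*k*co)*(N + 2*k*co) - 4*D) / ((N + 2*k*co) * D)"
    unfolding gmx g2v using Dp pos2 by (simp add: field_simps)
  hence "gmax - g2 = 16 * k^2 * si^2 / ((N + 2*k*co) * D)" unfolding num .
  moreover have "16 * k^2 * (sin (s - t))^2 /
            ((k^2 + 2*k*cos (s - t) + 1 + c) * ((k + 1)^2 + c) * ((k - 1)^2 + c))
      = 16 * k^2 * si^2 / ((N + 2*k*co) * D)"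
    by (subst den, subst mult.assoc, subst prod) (simp add: si_def)
  moreover have "g2 - gmin = 4 / (k^2 + 2*k*cos (s - t) + 1 + c)"
    by (subst den) (simp add: gmn g2v)
  ultimately show ?thesis by simp
qed

end
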